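(* Let $\mathbf a:\mathbb R\to L^2(\mathbb R)$, $\mathbf a(\theta)(s)=\pi^{-1/4}e^{-\frac12(s-\theta)^2}$. Let $\theta_1\ne\theta_2$ be real, $c_1,c_2>0$, and $\mathbf y=c_1\mathbf a(\theta_1)+c_2\mathbf a(\theta_2)$. Then no maximizer of $\theta\mapsto|\langle\mathbf a(\theta),\mathbf y\rangle|$ over $\mathbb R$ belongs to $\{\theta_1,\theta_2\}$; in particular the first OMP iteration with input $\mathbf y$ selects a parameter outside $\{\theta_1,\theta_2\}$.
   Context: $\langle\cdot,\cdot\rangle$ is the $L^2(\mathbb R)$ inner product. The first OMP iteration with input $\mathbf y$ selects some $\widehat\theta_1\in\arg\max_\theta|\langle\mathbf a(\theta),\mathbf y\rangle|$. *)

theory Defs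
  imports "HOL-Analysis.Analysis"
begin

definition atom :: "real \<Rightarrow> real \<Rightarrow> real" where
  "atom \<theta> s = pi powr (-1/4) * exp (-(1/2) * (s - \<theta>)^2)"

definition l2_inner :: "(real \<Rightarrow> real) \<Rightarrow> (real \<Rightarrow> real) \<Rightarrow> real" where
  "l2_inner f g = (LINT s|lborel. f s * g s)"

end

theory Submission imports Defs "HOL-Probability.Distributions" begin

lemma p: "pi powr (-1/4) * pi powr (-1/4) = 1 / sqrt pi"
proof -
  have "pi powr (-1/4) * pi powr (-1/4) = pi powr (-(1/2))"
    by (simp add: powr_add[symmetric])
  also have "\<dots> = 1 / sqrt pi" by (simp add: powr_minus_divide powr_half_sqrt)
  finally show ?thesis .
qed

lemma e: fixes s \<phi> \<theta> :: real shows "exp (-(1/2) * (s - \<phi>)\<^sup>2) * exp (-(1/2) * (s - \<theta>)\<^sup>2) = exp (-(\<phi> - \<theta>)\<^sup>2/4) * exp (-(s - (\<phi>+\<theta>)/2)\<^sup>2)"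
proof -
  have "-(1/2) * (s - \<phi>)\<^sup>2 + -(1/2) * (s - \<theta>)\<^sup>2 = -(\<phi> - \<theta>)\<^sup>2/4 + -(s - (\<phi>+\<theta>)/2)\<^sup>2"
    by (simp add: power2_eq_square field_simps)
  then show ?thesis by (metis exp_add)
qed

lemma atom_prod: "atom \<phi> s * atom \<theta> s = exp (-(\<phi> - \<theta>)\<^sup>2/4) * normal_density ((\<phi>+\<theta>)/2) (sqrt (1/2)) s"
proof -
  have n: "normal_density ((\<phi>+\<theta>)/2) (sqrt (1/2)) s = 1 / sqrt pi * exp (-(s - (\<phi>+\<theta>)/2)\<^sup>2)"
    by (simp add: normal_density_def)
  have "atom \<phi> s * atom \<theta> s = (pi powr (-1/4) * pi powr (-1/4)) * (exp (-(1/2) * (s - \<phi>)\<^sup>2) * exp (-(1/2) * (s - \<theta>)\<^sup>2))"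
    unfolding atom_def by (simp only: ac_simps)
  also have "\<dots> = 1 / sqrt pi * (exp (-(\<phi> - \<theta>)\<^sup>2/4) * exp (-(s - (\<phi>+\<theta>)/2)\<^sup>2))"
    unfolding p e ..
  finally show ?thesis unfolding n by simp
qed

lemma inner_atom: "l2_inner (atom \<phi>) (atom \<theta>) = exp (-(\<phi> - \<theta>)\<^sup>2/4)"
  unfolding l2_inner_def atom_prod by simp

lemma integrable_atom_prod: "integrable lborel (\<lambda>s. atom \<phi> s * atom \<theta> s)"
  unfolding atom_prod by simp

lemma not_max:
  fixes a b ca cb :: real
  assumes "a \<noteq> b" "ca > 0" "cb > 0"
  shows "\<exists>\<phi>. ca * exp (-(\<phi> - a)\<^sup>2/4) + cb * exp (-(\<phi> - b)\<^sup>2/4) > ca * exp (-(a - a)\<^sup>2/4) + cb * exp (-(a - b)\<^sup>2/4)"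
proof (rule ccontr)
  assume H: "\<not> ?thesis"
  let ?g = "\<lambda>\<phi>. ca * exp (-(\<phi> - a)\<^sup>2/4) + cb * exp (-(\<phi> - b)\<^sup>2/4)"
  have D: "(?g has_real_derivative (ca * (exp (-(a - a)\<^sup>2/4) * (-(2 * (a - a)) / 4)) + cb * (exp (-(a - b)\<^sup>2/4) * (-(2 * (a - b)) / 4)))) (at a)"
    by (auto intro!: derivative_eq_intros simp: power2_eq_square field_simps)
  have "\<forall>y. \<bar>a - y\<bar> < 1 \<longrightarrow> ?g y \<le> ?g a" using H by (auto simp: not_less)
  from DERIV_local_max[OF D zero_less_one this]
  have "cb * (exp (-(a - b)\<^sup>2/4) * (-(2 * (a - b)) / 4)) = 0" by simp
  with assms show False by simp
qed

theorem mainTheorem15: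
  fixes \<theta>1 \<theta>2 c1 c2 :: real and y :: "real \<Rightarrow> real"
  assumes "\<theta>1 \<noteq> \<theta>2" and "c1 > 0" and "c2 > 0"
    and "y = (\<lambda>s. c1 * atom \<theta>1 s + c2 * atom \<theta>2 s)"
  shows "\<forall>\<theta>. (\<forall>\<phi>. \<bar>l2_inner (atom \<phi>) y\<bar> \<le> \<bar>l2_inner (atom \<theta>) y\<bar>)
              \<longrightarrow> \<theta> \<notin> {\<theta>1, \<theta>2}"
proof -
  have I: "l2_inner (atom \<phi>) y = c1 * exp (-(\<phi> - \<theta>1)\<^sup>2/4) + c2 * exp (-(\<phi> - \<theta>2)\<^sup>2/4)" for \<phi>
  proof -
    have "l2_inner (atom \<phi>) y = (LINT s|lborel. c1 * (atom \<phi> s * atom \<theta>1 s) + c2 * (atom \<phi> s * atom \<theta>2 s))"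
      unfolding l2_inner_def assms(4) by (simp add: algebra_simps)
    also have "\<dots> = c1 * l2_inner (atom \<phi>) (atom \<theta>1) + c2 * l2_inner (atom \<phi>) (atom \<theta>2)"
    proof -
      have i1: "integrable lborel (\<lambda>s. c1 * (atom \<phi> s * atom \<theta>1 s))"
        using integrable_atom_prod by (rule integrable_mult_right)
      have i2: "integrable lborel (\<lambda>s. c2 * (atom \<phi> s * atom \<theta>2 s))"
        using integrable_atom_prod by (rule integrable_mult_right)
      show ?thesis unfolding l2_inner_def using Bochner_Integration.integral_add[OF i1 i2] by simp
    qed
    finally show ?thesis by (simp add: inner_atom)
  qed
  have A: "\<bar>l2_inner (atom \<phi>) y\<bar> = c1 * exp (-(\<phi> - \<theta>1)\<^sup>2/4) + c2 * exp (-(\<phi> - \<theta>2)\<^sup>2/4)" for \<phi>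
    unfolding I using assms(2,3) by (intro abs_of_nonneg add_nonneg_nonneg) auto
  show ?thesis
  proof (intro allI impI)
    fix \<theta> assume M: "\<forall>\<phi>. \<bar>l2_inner (atom \<phi>) y\<bar> \<le> \<bar>l2_inner (atom \<theta>) y\<bar>"
    show "\<theta> \<notin> {\<theta>1, \<theta>2}"
    proof
      assume "\<theta> \<in> {\<theta>1, \<theta>2}"
      then show False
      proof
        assume t: "\<theta> = \<theta>1"
        obtain \<phi> where "c1 * exp (-(\<phi> - \<theta>1)\<^sup>2/4) + c2 * exp (-(\<phi> - \<theta>2)\<^sup>2/4) > c1 * exp (-(\<theta>1 - \<theta>1)\<^sup>2/4) + c2 * exp (-(\<theta>1 - \<theta>2)\<^sup>2/4)"
          using not_max[OF assms(1-3)] by blast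
        with M[rule_format, of \<phi>] show False unfolding A t by linarith
      next
        assume "\<theta> \<in> {\<theta>2}" then have t: "\<theta> = \<theta>2" by simp
        obtain \<phi> where "c2 * exp (-(\<phi> - \<theta>2)\<^sup>2/4) + c1 * exp (-(\<phi> - \<theta>1)\<^sup>2/4) > c2 * exp (-(\<theta>2 - \<theta>2)\<^sup>2/4) + c1 * exp (-(\<theta>2 - \<theta>1)\<^sup>2/4)"
          using not_max[of \<theta>2 \<theta>1 c2 c1] assms(1-3) by auto
        with M[rule_format, of \<phi>] show False unfolding A t by linarith
      qed
    qed
  qed
qed

end
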